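(* Let $T\in\mathcal{C}^{-\infty}(\mathbb{R})$, let $k$ be the minimum natural number for which there exists $f\in\mathcal{C}^1(\mathbb{R})$ with $T=\partial^kf$ (distributional derivative), let $f$ be such a function, and let $\widetilde{T}=D^kf^*$ (where $f^*$ is restricted to $[-\beta,\beta]$). Then for every test function $\varphi\in\mathcal{D}(\mathbb{R})$, $$\int^*\widetilde{T}(x)\varphi^*(x)\,dx=\langle T,\varphi\rangle.$$
   Context: $\mathcal{D}(\mathbb{R})$ is the space of smooth compactly supported functions, $\mathcal{D}'(\mathbb{R})$ the distributions, and $\mathcal{C}^{-\infty}(\mathbb{R})=\{T\in\mathcal{D}'(\mathbb{R}):\exists k\in\mathbb{N},\ \exists f\in\mathcal{C}^0(\mathbb{R}),\ T=\partial^kf\}$. Framework (Λ-limits / nonstandard analysis): $\mathfrak{X}=\mathcal{P}_{fin}(\mathfrak{F}(\mathbb{R},\mathbb{R}))$ directed by inclusion; $\mathbb{R}^*\supset\mathbb{R}$ is a non-Archimedean ordered field of Λ-limits of nets $\mathfrak{X}\to\mathbb{R}$; internal sets/functions, natural extensions $E^*,f^*$, hyperfinite sums are defined via Λ-limits; $\int^*$ is the natural extension of the Lebesgue integral. For $\lambda\in\mathfrak{X}$, $V_\lambda$ is the span of $\lambda$; an internal $u=\lim_{\lambda\uparrow\Lambda}u_\lambda$ is an ultrafunction if $u_\lambda\in V_\lambda$ for all $\lambda$; for a vector space $W$ of real functions, $\widetilde{W}=W^*\cap\{\text{ultrafunctions}\}$. Grid: a positive infinite $\beta\in\mathbb{R}^*$,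 a hyperfinite $\Gamma=\{\gamma_0<\dots<\gamma_\ell\}\subset\mathbb{R}^*$ with $\gamma_0=-\beta$, $\gamma_\ell=\beta$, $0<\gamma_{j+1}-\gamma_j<\eta$ for a fixed infinitesimal $\eta$, and $\mathbb{R}\subseteq\Gamma$; $\mathbb{I}_j=(\gamma_j,\gamma_{j+1})_{\mathbb{R}^*}$ with characteristic function $\chi_j$. $\mathfrak{U}(\mathbb{R})$: functions $u:[-\beta,\beta]\to\mathbb{R}^*$ of the form $\sum_{j=0}^{\ell-1}v_j\chi_j$ with $v_j\in\widetilde{\mathcal{C}^1(\mathbb{R})}$, with the $L^2$ inner product $\int^*uv$ (elements extended by $0$ outside $[-\beta,\beta]$). $u(\gamma_j^\pm)$ are internal one-sided limits; values at grid points: $u(\gamma_j)=\tfrac12(u(\gamma_j^+)+u(\gamma_j^-))$ for $1\le j\le\ell-1$, $u(-\beta)=u(\gamma_0^+)$, $u(\beta)=u(\gamma_\ell^-)$. For $q\in[-\beta,\beta]$, $\delta_q$ is the unique element of $\mathfrak{U}(\mathbb{R})$ with $\int^*w\delta_q=w(q)$ for all $w\in\mathfrak{U}(\mathbb{R})$. Derivative $D:\mathfrak{U}(\mathbb{R})\to\mathfrak{U}(\mathbb{R})$: for $u=\sum_jv_j\chi_j$, $u'=\sum_jv_j'\chi_j$, $P_{\mathfrak{U}}$ the orthogonal projection onto $\mathfrak{U}(\mathbb{R})$, $\triangle u(\gamma_j)=u(\gamma_j^+)-u(\gamma_j^-)$, and $Du=P_{\mathfrak{U}}u'+\sum_{j=1}^{\ell-1}\triangle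 u(\gamma_j)\delta_{\gamma_j}$; $D^k$ is its $k$-fold iterate. *)

theory Defs
  imports "HOL-Analysis.Analysis"
begin

(* The Lambda-limit framework is modelled componentwise: an internal object is a
   net indexed by lambda in X = finite sets of real functions, and two internal
   objects are equal iff they agree eventually along a fine ultrafilter U on X. *)

definition fine_ultra :: "(real \<Rightarrow> real) set filter \<Rightarrow> bool" where
  "fine_ultra U \<longleftrightarrow> U \<noteq> bot \<and> (\<forall>P. eventually P U \<or> eventually (\<lambda>l. \<not> P l) U)
     \<and> eventually finite U \<and> (\<forall>a. finite a \<longrightarrow> eventually (\<lambda>l. a \<subseteq> l) U)"

definition C1 :: "(real \<Rightarrow> real) set" where
  "C1 = {f. \<exists>f'. (\<forall>x. (f has_real_derivative f' x) (at x)) \<and> continuous_on UNIV f'}"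

definition test_fun :: "(real \<Rightarrow> real) \<Rightarrow> bool" where
  "test_fun \<phi> \<longleftrightarrow> (\<forall>n x. (deriv ^^ n) \<phi> differentiable (at x)) \<and> compact (closure {x. \<phi> x \<noteq> 0})"

definition dist_deriv_eq :: "((real \<Rightarrow> real) \<Rightarrow> real) \<Rightarrow> nat \<Rightarrow> (real \<Rightarrow> real) \<Rightarrow> bool" where
  "dist_deriv_eq T k f \<longleftrightarrow>
     (\<forall>\<phi>. test_fun \<phi> \<longrightarrow> T \<phi> = (-1) ^ k * (LINT x|lborel. f x * (deriv ^^ k) \<phi> x))"

definition Cminf :: "((real \<Rightarrow> real) \<Rightarrow> real) \<Rightarrow> bool" where
  "Cminf T \<longleftrightarrow> (\<exists>k f. continuous_on UNIV f \<and> dist_deriv_eq T k f)"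

definition Vspan :: "(real \<Rightarrow> real) set \<Rightarrow> (real \<Rightarrow> real) set" where
  "Vspan l = {u. \<exists>c. u = (\<lambda>x. \<Sum>g\<in>l. c g * g x)}"

definition grid_pts :: "real set \<Rightarrow> real list" where
  "grid_pts G = sorted_list_of_set G"

definition cell :: "real set \<Rightarrow> nat \<Rightarrow> real set" where
  "cell G j = {grid_pts G ! j <..< grid_pts G ! Suc j}"

definition Ucomp :: "(real \<Rightarrow> real) set \<Rightarrow> real set \<Rightarrow> (real \<Rightarrow> real) set" where
  "Ucomp l G = {u. \<exists>v. (\<forall>j < length (grid_pts G) - 1. v j \<in> Vspan l \<inter> C1) \<and>
       u = (\<lambda>x. \<Sum>j < length (grid_pts G) - 1. v j x * indicator (cell G j) x)}"

definition uval :: "real set \<Rightarrow> (real \<Rightarrow> real) \<Rightarrow> real \<Rightarrow> real" where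
  "uval G u q = (if q = Min G then Lim (at_right q) u
                 else if q = Max G then Lim (at_left q) u
                 else if q \<in> G then (Lim (at_right q) u + Lim (at_left q) u) / 2
                 else u q)"

definition udelta :: "(real \<Rightarrow> real) set \<Rightarrow> real set \<Rightarrow> real \<Rightarrow> real \<Rightarrow> real" where
  "udelta l G q = (THE d. d \<in> Ucomp l G \<and>
      (\<forall>w \<in> Ucomp l G. (LINT x|lborel. w x * d x) = uval G w q))"

definition uproj :: "(real \<Rightarrow> real) set \<Rightarrow> real set \<Rightarrow> (real \<Rightarrow> real) \<Rightarrow> real \<Rightarrow> real" where
  "uproj l G g = (THE p. p \<in> Ucomp l G \<and>
      (\<forall>w \<in> Ucomp l G. (LINT x|lborel. (g x - p x) * w x) = 0))"

(* piecewise derivative u' = sum v_j' chi_j *)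
definition uprime :: "real set \<Rightarrow> (real \<Rightarrow> real) \<Rightarrow> real \<Rightarrow> real" where
  "uprime G u = (\<lambda>x. if x \<in> G then 0 else deriv u x)"

definition uD :: "(real \<Rightarrow> real) set \<Rightarrow> real set \<Rightarrow> (real \<Rightarrow> real) \<Rightarrow> real \<Rightarrow> real" where
  "uD l G u = (\<lambda>x. uproj l G (uprime G u) x +
      (\<Sum>q \<in> G - {Min G, Max G}. (Lim (at_right q) u - Lim (at_left q) u) * udelta l G q x))"

definition grid_ok :: "real \<Rightarrow> real \<Rightarrow> real set \<Rightarrow> bool" where
  "grid_ok b eta G \<longleftrightarrow> finite G \<and> G \<subseteq> {-b..b} \<and> -b \<in> G \<and> b \<in> G \<and> 0 < eta \<and>
     (\<forall>j < length (grid_pts G) - 1. grid_pts G ! Suc j - grid_pts G ! j < eta)"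

end

theory Submission
  imports Defs
begin


definition ispan :: "'i set \<Rightarrow> ('i \<Rightarrow> real \<Rightarrow> real) \<Rightarrow> (real \<Rightarrow> real) set" where
  "ispan I bs = {u. \<exists>c. u = (\<lambda>x. \<Sum>i\<in>I. c i * bs i x)}"

lemma riesz:
  fixes W :: "(real\<Rightarrow>real) set" and Q :: "(real\<Rightarrow>real) \<Rightarrow> (real\<Rightarrow>real) \<Rightarrow> real"
    and L :: "(real\<Rightarrow>real) \<Rightarrow> real"
  assumes "finite I" "W \<subseteq> ispan I bs" "(\<lambda>x. 0) \<in> W"
   and "\<And>u w. u\<in>W \<Longrightarrow> w\<in>W \<Longrightarrow> (\<lambda>x. u x + w x) \<in> W"
   and "\<And>c u. u\<in>W \<Longrightarrow> (\<lambda>x. c * u x) \<in> W"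
   and "\<And>u v w. u\<in>W \<Longrightarrow> v\<in>W \<Longrightarrow> w\<in>W \<Longrightarrow> Q (\<lambda>x. u x + v x) w = Q u w + Q v w"
   and "\<And>c u w. u\<in>W \<Longrightarrow> w\<in>W \<Longrightarrow> Q (\<lambda>x. c * u x) w = c * Q u w"
   and "\<And>u w. u\<in>W \<Longrightarrow> w\<in>W \<Longrightarrow> Q u w = Q w u"
   and "\<And>u. u\<in>W \<Longrightarrow> Q u u = 0 \<Longrightarrow> u = (\<lambda>x. 0)"
   and "\<And>u w. u\<in>W \<Longrightarrow> w\<in>W \<Longrightarrow> L (\<lambda>x. u x + w x) = L u + L w"
   and "\<And>c u. u\<in>W \<Longrightarrow> L (\<lambda>x. c * u x) = c * L u"
  shows "\<exists>p\<in>W. \<forall>w\<in>W. Q p w = L w"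
  using assms
proof (induction I arbitrary: W L rule: finite_induct)
  case empty
  have W0: "W = {\<lambda>x. 0}" using empty.prems(1,2) by (auto simp: ispan_def)
  have "Q (\<lambda>x. 0) (\<lambda>x. 0) = 0" using empty.prems(6)[of "\<lambda>x. 0" "\<lambda>x. 0" 0] W0 by simp
  moreover have "L (\<lambda>x. 0) = 0" using empty.prems(10)[of "\<lambda>x. 0" 0] W0 by simp
  ultimately show ?case using W0 by auto
next
  case (insert i I)
  note W = insert.prems
  have Q0: "Q (\<lambda>x. 0) w = 0" if "w \<in> W" for w using W(6)[of "\<lambda>x. 0" w 0] W(2) that by simp
  have L0: "L (\<lambda>x. 0) = 0" using W(10)[of "\<lambda>x. 0" 0] W(2) by simp
  have sub: "(\<lambda>x. u x - c * w x) \<in> W" if "u \<in> W" "w \<in> W" for u w c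
  proof -
    have "(\<lambda>x. u x + (- c) * w x) \<in> W" using W(3,4) that by blast
    then show ?thesis by simp
  qed
  have lin: "(\<lambda>x. u x + c * w x) \<in> W" if "u \<in> W" "w \<in> W" for u w c
    using W(3,4) that by blast
  have Qlin: "Q (\<lambda>x. u x + c * w x) v = Q u v + c * Q w v" if "u \<in> W" "w \<in> W" "v \<in> W" for u w v c
    using W(5)[of u "\<lambda>x. c * w x" v] W(6)[of w v c] W(4) that by simp
  have Qsub: "Q (\<lambda>x. u x - c * w x) v = Q u v - c * Q w v" if "u \<in> W" "w \<in> W" "v \<in> W" for u w v c
    using Qlin[OF that, of "-c"] by simp
  have Llin: "L (\<lambda>x. u x + c * w x) = L u + c * L w" if "u \<in> W" "w \<in> W" for u w c
    using W(9)[of u "\<lambda>x. c * w x"] W(10)[of w c] W(4) that by simp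
  have Lsub: "L (\<lambda>x. u x - c * w x) = L u - c * L w" if "u \<in> W" "w \<in> W" for u w c
    using Llin[OF that, of "-c"] by simp
  show ?case
  proof (cases "W \<subseteq> ispan I bs")
    case True
    show ?thesis by (rule insert.IH[OF True W(2-)])
  next
    case False
    then obtain w1 where w1: "w1 \<in> W" "w1 \<notin> ispan I bs" by blast
    obtain c1 where c1: "w1 = (\<lambda>x. \<Sum>j\<in>insert i I. c1 j * bs j x)" using w1 W(1) by (auto simp: ispan_def)
    have c1i: "c1 i \<noteq> 0"
    proof
      assume "c1 i = 0"
      then have "w1 = (\<lambda>x. \<Sum>j\<in>I. c1 j * bs j x)" using c1 insert.hyps by simp
      then show False using w1 by (auto simp: ispan_def)
    qed
    define W0 where "W0 = W \<inter> ispan I bs"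
    have dec: "\<exists>t. (\<lambda>x. w x - t * w1 x) \<in> W0" if wW: "w \<in> W" for w
    proof -
      obtain c where c: "w = (\<lambda>x. \<Sum>j\<in>insert i I. c j * bs j x)" using wW W(1) by (auto simp: ispan_def)
      define t where "t = c i / c1 i"
      have "(\<lambda>x. w x - t * w1 x) = (\<lambda>x. \<Sum>j\<in>I. (c j - t * c1 j) * bs j x)"
        using insert.hyps c1i by (auto simp: c c1 t_def sum_distrib_left algebra_simps sum_subtractf)
      then have "(\<lambda>x. w x - t * w1 x) \<in> ispan I bs" by (auto simp: ispan_def)
      then show ?thesis using sub[OF wW w1(1)] by (auto simp: W0_def)
    qed
    have W0W: "W0 \<subseteq> W" by (auto simp: W0_def)
    have W0p: "W0 \<subseteq> ispan I bs" "(\<lambda>x. 0) \<in> W0"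
      "\<And>u w. u\<in>W0 \<Longrightarrow> w\<in>W0 \<Longrightarrow> (\<lambda>x. u x + w x) \<in> W0"
      "\<And>c u. u\<in>W0 \<Longrightarrow> (\<lambda>x. c * u x) \<in> W0"
    proof -
      show "W0 \<subseteq> ispan I bs" by (auto simp: W0_def)
      have "(\<lambda>x. 0) = (\<lambda>x. \<Sum>j\<in>I. 0 * bs j x)" by simp
      then show "(\<lambda>x. 0) \<in> W0" using W(2) unfolding W0_def ispan_def by (intro IntI CollectI) (blast, rule exI[of _ "\<lambda>_. 0"], simp)
      fix u w c
      show "(\<lambda>x. u x + w x) \<in> W0" if uw: "u\<in>W0" "w\<in>W0"
      proof -
        obtain a where a: "u = (\<lambda>x. \<Sum>j\<in>I. a j * bs j x)" using uw by (auto simp: W0_def ispan_def)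
        obtain d where d: "w = (\<lambda>x. \<Sum>j\<in>I. d j * bs j x)" using uw by (auto simp: W0_def ispan_def)
        have "(\<lambda>x. u x + w x) = (\<lambda>x. \<Sum>j\<in>I. (a j + d j) * bs j x)"
          by (auto simp: a d algebra_simps sum.distrib)
        moreover have "(\<lambda>x. u x + w x) \<in> W" using uw W(3) by (auto simp: W0_def)
        ultimately show ?thesis unfolding W0_def ispan_def by auto
      qed
      show "(\<lambda>x. c * u x) \<in> W0" if uw: "u\<in>W0"
      proof -
        obtain a where a: "u = (\<lambda>x. \<Sum>j\<in>I. a j * bs j x)" using uw by (auto simp: W0_def ispan_def)
        have "(\<lambda>x. c * u x) = (\<lambda>x. \<Sum>j\<in>I. (c * a j) * bs j x)"
          by (auto simp: a algebra_simps sum_distrib_left)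
        moreover have "(\<lambda>x. c * u x) \<in> W" using uw W(4) by (auto simp: W0_def)
        ultimately show ?thesis unfolding W0_def ispan_def by auto
      qed
    qed
    have W0q1: "Q (\<lambda>x. u x + v x) w = Q u w + Q v w" if "u\<in>W0" "v\<in>W0" "w\<in>W0" for u v w
      using W(5)[of u v w] W0W that by auto
    have W0q2: "Q (\<lambda>x. c * u x) w = c * Q u w" if "u\<in>W0" "w\<in>W0" for c u w
      using W(6)[of u w c] W0W that by auto
    have W0q3: "Q u w = Q w u" if "u\<in>W0" "w\<in>W0" for u w
      using W(7)[of u w] W0W that by auto
    have W0q4: "u = (\<lambda>x. 0)" if "u\<in>W0" "Q u u = 0" for u
      using W(8)[of u] W0W that by auto
    note W0q = W0q1 W0q2 W0q3 W0q4
    obtain r where r: "r \<in> W0" "\<And>w. w \<in> W0 \<Longrightarrow> Q r w = Q w1 w"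
    proof -
      have "\<exists>p\<in>W0. \<forall>w\<in>W0. Q p w = Q w1 w"
      proof (rule insert.IH[OF W0p W0q])
        fix u w assume "u \<in> W0" "w \<in> W0"
        then show "Q w1 (\<lambda>x. u x + w x) = Q w1 u + Q w1 w"
        proof -
          have "Q w1 (\<lambda>x. u x + w x) = Q (\<lambda>x. u x + w x) w1" using W(7) W0W W0p(3) w1(1) \<open>u \<in> W0\<close> \<open>w \<in> W0\<close> by blast
          also have "\<dots> = Q u w1 + Q w w1" using W(5) W0W w1(1) \<open>u \<in> W0\<close> \<open>w \<in> W0\<close> by blast
          finally show ?thesis using W(7) W0W w1(1) \<open>u \<in> W0\<close> \<open>w \<in> W0\<close> by (metis subsetD)
        qed
      next
        fix c u assume "u \<in> W0"
        then show "Q w1 (\<lambda>x. c * u x) = c * Q w1 u"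
        proof -
          have "Q w1 (\<lambda>x. c * u x) = Q (\<lambda>x. c * u x) w1" using W(7) W0W W0p(4) w1(1) \<open>u \<in> W0\<close> by blast
          also have "\<dots> = c * Q u w1" using W(6) W0W w1(1) \<open>u \<in> W0\<close> by blast
          finally show ?thesis using W(7) W0W w1(1) \<open>u \<in> W0\<close> by (metis subsetD)
        qed
      qed
      then show ?thesis using that by blast
    qed
    obtain p0 where p0: "p0 \<in> W0" "\<And>w. w \<in> W0 \<Longrightarrow> Q p0 w = L w"
    proof -
      have "\<exists>p\<in>W0. \<forall>w\<in>W0. Q p w = L w"
        by (rule insert.IH[OF W0p W0q]) (use W(9,10) W0W in blast)+
      then show ?thesis using that by blast
    qed
    define e where "e = (\<lambda>x. w1 x - 1 * r x)"
    have eW: "e \<in> W" unfolding e_def using sub w1(1) r(1) W0W by blast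
    have eort: "Q e v = 0" if "v \<in> W0" for v
      unfolding e_def using Qsub[of w1 r v 1] w1(1) r that W0W by auto
    define s where "s = L e / Q e e"
    define p where "p = (\<lambda>x. p0 x + s * e x)"
    have pW: "p \<in> W" unfolding p_def using lin eW p0(1) W0W by blast
    have "Q p w = L w" if wW: "w \<in> W" for w
    proof -
      obtain t where t: "(\<lambda>x. w x - t * w1 x) \<in> W0" using dec[OF wW] by blast
      define z where "z = (\<lambda>x. w x - t * w1 x + t * r x)"
      have zW0: "z \<in> W0" unfolding z_def using W0p(3)[OF t W0p(4)[OF r(1)]] by simp
      have wz: "w = (\<lambda>x. z x + t * e x)" unfolding z_def e_def by (auto simp: algebra_simps)
      have zW: "z \<in> W" using zW0 W0W by blast
      have "Q p w = Q p0 w + s * Q e w" unfolding p_def using Qlin p0(1) W0W eW wW by blast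
      also have "Q p0 w = Q w p0" using W(7) p0(1) W0W wW by blast
      also have "\<dots> = Q z p0 + t * Q e p0" using wz Qlin[OF zW eW, of p0 t] p0(1) W0W by auto
      also have "Q z p0 = Q p0 z" using W(7) p0(1) W0W zW by blast
      also have "\<dots> = L z" using p0(2) zW0 by blast
      also have "Q e p0 = 0" using eort p0(1) by blast
      also have "Q e w = Q w e" using W(7) eW wW by blast
      also have "\<dots> = Q z e + t * Q e e" using wz Qlin[OF zW eW, of e t] eW by auto
      also have "Q z e = 0" using W(7)[OF zW eW] eort[OF zW0] by simp
      finally have 1: "Q p w = L z + s * (t * Q e e)" by simp
      have 2: "L w = L z + t * L e" using wz Llin[OF zW eW, of t] by simp
      have "s * Q e e = L e"
      proof (cases "Q e e = 0")
        case True
        then have "e = (\<lambda>x. 0)" using W(8) eW by blast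
        then show ?thesis using True L0 by (simp add: s_def)
      qed (simp add: s_def)
      then show ?thesis using 1 2 by (simp add: algebra_simps)
    qed
    then show ?thesis using pW by blast
  qed
qed



locale grd =
  fixes l :: "(real\<Rightarrow>real) set" and G :: "real set" and b :: real
  assumes finl: "finite l" and finG: "finite G" and Gsub: "G \<subseteq> {-b..b}"
    and mb: "-b \<in> G" and pb: "b \<in> G" and bpos: "0 < b"
begin

definition N where "N = length (grid_pts G) - 1"
definition gp where "gp j = grid_pts G ! j"

lemma setxs: "set (grid_pts G) = G" using finG by (simp add: grid_pts_def)
lemma strict: "sorted_wrt (<) (grid_pts G)" using finG by (simp add: grid_pts_def)
lemma lenxs: "length (grid_pts G) = card G" using finG by (simp add: grid_pts_def)

lemma N1: "1 \<le> N"
proof -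
  have "{-b, b} \<subseteq> G" using mb pb by auto
  then have "card {-b,b} \<le> card G" using finG card_mono by blast
  moreover have "card {-b,b} = 2" using bpos by auto
  ultimately show ?thesis by (simp add: N_def lenxs)
qed

lemma lenN: "length (grid_pts G) = Suc N" using N1 by (simp add: N_def)

lemma mono: "i < j \<Longrightarrow> j \<le> N \<Longrightarrow> gp i < gp j"
  unfolding gp_def using sorted_wrt_nth_less[OF strict] lenN by auto

lemma mono_le: "i \<le> j \<Longrightarrow> j \<le> N \<Longrightarrow> gp i \<le> gp j"
  using mono by (cases "i = j") (auto simp: less_imp_le)

lemma mono_iff: "i \<le> N \<Longrightarrow> j \<le> N \<Longrightarrow> gp i < gp j \<longleftrightarrow> i < j"
  using mono mono_le by (meson linorder_not_le)

lemma gp_inj: "i \<le> N \<Longrightarrow> j \<le> N \<Longrightarrow> gp i = gp j \<longleftrightarrow> i = j"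
  using mono by (metis linorder_neqE_nat less_irrefl)

lemma gp_in: "j \<le> N \<Longrightarrow> gp j \<in> G"
  unfolding gp_def using lenN setxs by (metis le_imp_less_Suc nth_mem)

lemma G_gp: "x \<in> G \<Longrightarrow> \<exists>j\<le>N. x = gp j"
  unfolding gp_def using lenN setxs by (metis in_set_conv_nth less_Suc_eq_le)

lemma gp_range: "j \<le> N \<Longrightarrow> gp j \<in> {-b..b}" using gp_in Gsub by blast

lemma gp0: "gp 0 = -b"
proof -
  obtain j where j: "j \<le> N" "-b = gp j" using G_gp mb by blast
  show ?thesis
  proof (cases "j = 0")
    case False
    then have "gp 0 < gp j" using mono j by auto
    then show ?thesis using gp_range[of 0] j by auto
  qed (use j in auto)
qed

lemma gpN: "gp N = b"
proof -
  obtain j where j: "j \<le> N" "b = gp j" using G_gp pb by blast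
  show ?thesis
  proof (cases "j = N")
    case False
    then have "gp j < gp N" using mono j by auto
    then show ?thesis using gp_range[of N] j by auto
  qed (use j in auto)
qed

lemma MinG: "Min G = -b"
proof -
  have "Min G \<le> -b" using Min_le[OF finG mb] .
  moreover have "Min G \<in> G" using Min_in[OF finG] mb by blast
  then have "Min G \<in> {-b..b}" using Gsub by blast
  ultimately show ?thesis by simp
qed
lemma MaxG: "Max G = b"
proof -
  have "b \<le> Max G" using Max_ge[OF finG pb] .
  moreover have "Max G \<in> G" using Max_in[OF finG] pb by blast
  then have "Max G \<in> {-b..b}" using Gsub by blast
  ultimately show ?thesis by simp
qed

lemma cell_eq: "cell G j = {gp j<..<gp (Suc j)}" by (simp add: cell_def gp_def)

lemma cell_notG: "x \<in> cell G j \<Longrightarrow> j < N \<Longrightarrow> x \<notin> G"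
proof
  assume x: "x \<in> cell G j" "j < N" "x \<in> G"
  then obtain i where i: "i \<le> N" "x = gp i" using G_gp by blast
  have "gp j < gp i" "gp i < gp (Suc j)" using x i cell_eq by auto
  then have "j < i" "i < Suc j" using mono_iff i x(2) by auto
  then show False by auto
qed

lemma cell_sub: "j < N \<Longrightarrow> cell G j \<subseteq> {-b<..<b}"
  using mono_le[of 0 j] mono_le[of "Suc j" N] gp0 gpN cell_eq by fastforce

lemma disj: "i < N \<Longrightarrow> j < N \<Longrightarrow> i \<noteq> j \<Longrightarrow> x \<in> cell G i \<Longrightarrow> x \<notin> cell G j"
proof
  assume a: "i < N" "j < N" "i \<noteq> j" "x \<in> cell G i" "x \<in> cell G j"
  show False
  proof (cases "i < j")
    case True
    then have "gp (Suc i) \<le> gp j" using mono_le a by auto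
    then show False using a cell_eq by auto
  next
    case False
    then have "gp (Suc j) \<le> gp i" using mono_le a by auto
    then show False using a cell_eq by auto
  qed
qed

lemma cover: assumes "x \<in> {-b..b}" "x \<notin> G" shows "\<exists>j<N. x \<in> cell G j"
proof -
  define S where "S = {j. j \<le> N \<and> gp j < x}"
  have "x \<noteq> -b" using assms mb by auto
  then have "0 \<in> S" using assms gp0 by (auto simp: S_def)
  have fin: "finite S" by (auto simp: S_def)
  define j where "j = Max S"
  have jS: "j \<in> S" using fin \<open>0 \<in> S\<close> j_def Max_in by blast
  have jN: "j < N"
  proof -
    have "j \<noteq> N" using jS gpN assms by (auto simp: S_def)
    then show ?thesis using jS by (auto simp: S_def)
  qed
  have "\<not> Suc j \<in> S"
  proof
    assume "Suc j \<in> S"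
    then have "Suc j \<le> j" using Max_ge[OF fin] j_def by blast
    then show False by simp
  qed
  then have "x \<le> gp (Suc j)" using jN by (auto simp: S_def)
  moreover have "x \<noteq> gp (Suc j)" using gp_in[of "Suc j"] jN assms by auto
  moreover have "gp j < x" using jS by (simp add: S_def)
  ultimately have "x \<in> cell G j" by (simp add: cell_eq)
  then show ?thesis using jN by blast
qed

lemma sum_single: "j < N \<Longrightarrow> x \<in> cell G j \<Longrightarrow> (\<Sum>i<N. a i * indicator (cell G i) x) = (a j :: real)"
  by (subst sum.remove[of _ j]) (auto intro!: sum.neutral dest: disj)

lemma sum_none: "(\<And>j. j < N \<Longrightarrow> x \<notin> cell G j) \<Longrightarrow> (\<Sum>i<N. a i * indicator (cell G i) x) = (0::real)"
  by (auto intro!: sum.neutral)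

lemma sum_prod: "(\<Sum>i<N. a i * indicator (cell G i) x) * (\<Sum>i<N. c i * indicator (cell G i) x)
    = (\<Sum>i<N. a i * c i * indicator (cell G i) x :: real)"
proof (cases "\<exists>j<N. x \<in> cell G j")
  case True
  then obtain j where jx: "j < N" "x \<in> cell G j" by blast
  have 1: "(\<Sum>i<N. a i * indicator (cell G i) x) = a j" by (rule sum_single[OF jx])
  have 2: "(\<Sum>i<N. c i * indicator (cell G i) x) = c j" by (rule sum_single[OF jx])
  have 3: "(\<Sum>i<N. a i * c i * indicator (cell G i) x) = a j * c j" by (rule sum_single[OF jx])
  show ?thesis by (simp only: 1 2 3)
next
  case False
  then show ?thesis by (simp add: sum_none)
qed

end


lemma C1D: assumes "v \<in> C1"
  shows "\<And>x. (v has_real_derivative deriv v x) (at x)" "continuous_on UNIV (deriv v)" "continuous_on UNIV v"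
proof -
  obtain f' where f': "\<And>x. (v has_real_derivative f' x) (at x)" "continuous_on UNIV f'"
    using assms by (auto simp: C1_def)
  have d: "deriv v = f'" using f'(1) by (auto intro!: ext DERIV_imp_deriv)
  show "\<And>x. (v has_real_derivative deriv v x) (at x)" using f'(1) d by simp
  show "continuous_on UNIV (deriv v)" using f'(2) d by simp
  show "continuous_on UNIV v" using f'(1) by (meson DERIV_isCont continuous_at_imp_continuous_on)
qed

lemma C1I: "(\<And>x. (v has_real_derivative v' x) (at x)) \<Longrightarrow> continuous_on UNIV v' \<Longrightarrow> v \<in> C1"
  by (auto simp: C1_def)

lemma C1_add: "u \<in> C1 \<Longrightarrow> w \<in> C1 \<Longrightarrow> (\<lambda>x. u x + w x) \<in> C1"
  by (rule C1I[where v'="\<lambda>x. deriv u x + deriv w x"])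
     (auto intro!: derivative_intros continuous_intros dest: C1D)

lemma C1_scal: "u \<in> C1 \<Longrightarrow> (\<lambda>x. c * u x) \<in> C1"
  by (rule C1I[where v'="\<lambda>x. c * deriv u x"])
     (auto intro!: DERIV_cmult continuous_intros dest: C1D)

lemma C1_0: "(\<lambda>x. 0) \<in> C1"
  by (rule C1I[where v'="\<lambda>x. 0"]) auto

lemma Vspan_add: "u \<in> Vspan l \<Longrightarrow> w \<in> Vspan l \<Longrightarrow> (\<lambda>x. u x + w x) \<in> Vspan l"
proof -
  assume "u \<in> Vspan l" "w \<in> Vspan l"
  then obtain c d where "u = (\<lambda>x. \<Sum>g\<in>l. c g * g x)" "w = (\<lambda>x. \<Sum>g\<in>l. d g * g x)"
    by (auto simp: Vspan_def)
  then have "(\<lambda>x. u x + w x) = (\<lambda>x. \<Sum>g\<in>l. (c g + d g) * g x)"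
    by (auto simp: algebra_simps sum.distrib)
  then show ?thesis by (auto simp: Vspan_def)
qed

lemma Vspan_scal: "u \<in> Vspan l \<Longrightarrow> (\<lambda>x. c * u x) \<in> Vspan l"
proof -
  assume "u \<in> Vspan l"
  then obtain d where "u = (\<lambda>x. \<Sum>g\<in>l. d g * g x)" by (auto simp: Vspan_def)
  then have "(\<lambda>x. c * u x) = (\<lambda>x. \<Sum>g\<in>l. (c * d g) * g x)"
    by (auto simp: algebra_simps sum_distrib_left)
  then show ?thesis by (auto simp: Vspan_def)
qed

lemma Vspan_0: "(\<lambda>x. 0) \<in> Vspan l"
proof -
  show ?thesis unfolding Vspan_def mem_Collect_eq by (rule exI[of _ "\<lambda>_. 0"]) simp
qed

lemma Vspan_mem: "finite l \<Longrightarrow> g \<in> l \<Longrightarrow> g \<in> Vspan l"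
proof -
  assume "finite l" "g \<in> l"
  then have e: "(\<lambda>x. \<Sum>h\<in>l. (if h = g then 1 else 0) * h x) = g"
  proof -
    have "(\<Sum>h\<in>l. (if h = g then 1 else 0) * h x) = (\<Sum>h\<in>l. if h = g then g x else 0)" for x
      by (rule sum.cong) auto
    then show ?thesis using \<open>finite l\<close> \<open>g \<in> l\<close> by (auto intro!: ext)
  qed
  show ?thesis unfolding Vspan_def mem_Collect_eq
    by (rule exI[of _ "\<lambda>h. if h = g then 1 else 0"]) (rule e[symmetric])
qed

lemma int_ioo: fixes h :: "real \<Rightarrow> real" shows "continuous_on UNIV h \<Longrightarrow> integrable lborel (\<lambda>x. h x * indicator {a<..<c} x :: real)"
proof -
  assume h: "continuous_on UNIV h"
  have "integrable lborel (\<lambda>x. indicator {a..c} x *\<^sub>R h x)"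
    by (rule borel_integrable_compact) (auto intro: continuous_on_subset[OF h] compact_Icc)
  then have "set_integrable lborel {a..c} h" by (simp add: set_integrable_def)
  then have "set_integrable lborel {a<..<c} h" by (rule set_integrable_subset) auto
  then show ?thesis by (simp add: set_integrable_def mult.commute)
qed

lemma Ci_HK: fixes h :: "real \<Rightarrow> real" assumes "a \<le> c" "continuous_on UNIV h"
  shows "(LINT x|lborel. h x * indicator {a<..<c} x) = integral {a..c} h"
proof -
  have "(LINT x|lborel. h x * indicator {a<..<c} x) = (LINT x|lborel. indicator {a..c} x *\<^sub>R h x)"
  proof (rule integral_discrete_difference[where X="{a,c}"])
    fix x assume "x \<notin> {a,c}" then show "h x * indicator {a<..<c} x = indicator {a..c} x *\<^sub>R h x"
      by (auto simp: indicator_def)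
  qed auto
  also have "\<dots> = integral {a..c} h"
  proof -
    have "integrable lborel (\<lambda>x. indicator {a..c} x *\<^sub>R h x)"
      by (rule borel_integrable_compact) (auto intro: continuous_on_subset[OF assms(2)] compact_Icc)
    then have "set_integrable lborel {a..c} h" by (simp add: set_integrable_def)
    from set_borel_integral_eq_integral(2)[OF this] show ?thesis
      by (simp add: set_lebesgue_integral_def)
  qed
  finally show ?thesis .
qed

lemma Ci_FTC: fixes f F :: "real \<Rightarrow> real" assumes "a \<le> c" "\<And>x. (F has_real_derivative f x) (at x)" "continuous_on UNIV f"
  shows "(LINT x|lborel. f x * indicator {a<..<c} x) = F c - F a"
proof -
  have "(LINT x|lborel. f x * indicator {a<..<c} x) = integral {a..c} f" by (rule Ci_HK[OF assms(1,3)])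
  also have "\<dots> = F c - F a"
    by (rule integral_unique, rule fundamental_theorem_of_calculus[OF assms(1)])
       (auto simp: has_real_derivative_iff_has_vector_derivative[symmetric]
             intro: has_field_derivative_at_within assms(2))
  finally show ?thesis .
qed

lemma Ci_parts: fixes v \<psi> \<psi>' :: "real \<Rightarrow> real" assumes "a \<le> c" "v \<in> C1" "\<And>x. (\<psi> has_real_derivative \<psi>' x) (at x)" "continuous_on UNIV \<psi>'"
  shows "(LINT x|lborel. (deriv v x * \<psi> x) * indicator {a<..<c} x) =
    v c * \<psi> c - v a * \<psi> a - (LINT x|lborel. (v x * \<psi>' x) * indicator {a<..<c} x)"
proof -
  have psic: "continuous_on UNIV \<psi>" using assms(3) by (meson DERIV_isCont continuous_at_imp_continuous_on)
  note vd = C1D[OF assms(2)]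
  have cont1: "continuous_on UNIV (\<lambda>x. deriv v x * \<psi> x)" using vd psic by (auto intro!: continuous_intros)
  have cont2: "continuous_on UNIV (\<lambda>x. v x * \<psi>' x)" using vd assms(4) by (auto intro!: continuous_intros)
  have "(LINT x|lborel. (deriv v x * \<psi> x + v x * \<psi>' x) * indicator {a<..<c} x) = v c * \<psi> c - v a * \<psi> a"
    by (rule Ci_FTC[OF assms(1)]) (auto intro!: derivative_eq_intros vd(1) assms(3) continuous_intros cont1 cont2)
  moreover have "(LINT x|lborel. (deriv v x * \<psi> x + v x * \<psi>' x) * indicator {a<..<c} x) =
     (LINT x|lborel. (deriv v x * \<psi> x) * indicator {a<..<c} x) + (LINT x|lborel. (v x * \<psi>' x) * indicator {a<..<c} x)"
    by (simp add: distrib_right int_ioo[OF cont1] int_ioo[OF cont2])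
  ultimately show ?thesis by simp
qed



declare sum_mult_indicator[simp del]

context grd begin

lemma Ucomp_eq: "Ucomp l G = {u. \<exists>v. (\<forall>j<N. v j \<in> Vspan l \<inter> C1) \<and> u = (\<lambda>x. \<Sum>j<N. v j x * indicator (cell G j) x)}"
  by (simp add: Ucomp_def N_def)

definition PCr :: "(nat \<Rightarrow> real \<Rightarrow> real) \<Rightarrow> (real \<Rightarrow> real) \<Rightarrow> bool" where
  "PCr h u \<longleftrightarrow> (\<forall>j<N. continuous_on UNIV (h j)) \<and> u = (\<lambda>x. \<Sum>j<N. h j x * indicator (cell G j) x)"

definition PCx :: "(nat \<Rightarrow> real \<Rightarrow> real) \<Rightarrow> (real \<Rightarrow> real) \<Rightarrow> bool" where
  "PCx v u \<longleftrightarrow> (\<forall>j<N. v j \<in> C1) \<and> (\<forall>x. x \<notin> G \<longrightarrow> u x = (\<Sum>j<N. v j x * indicator (cell G j) x))"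

lemma Sp_rep: assumes "u \<in> Ucomp l G"
  obtains v where "\<And>j. j < N \<Longrightarrow> v j \<in> Vspan l" "\<And>j. j < N \<Longrightarrow> v j \<in> C1" "PCr v u" "PCx v u"
proof -
  obtain v where v: "\<forall>j<N. v j \<in> Vspan l \<inter> C1" "u = (\<lambda>x. \<Sum>j<N. v j x * indicator (cell G j) x)"
    using assms by (auto simp: Ucomp_eq)
  have "PCr v u" using v by (auto simp: PCr_def intro: C1D(3))
  moreover have "PCx v u" using v by (auto simp: PCx_def)
  ultimately show ?thesis using that v by blast
qed

lemma Sp_I: "(\<And>j. j < N \<Longrightarrow> v j \<in> Vspan l) \<Longrightarrow> (\<And>j. j < N \<Longrightarrow> v j \<in> C1) \<Longrightarrow>
   (\<lambda>x. \<Sum>j<N. v j x * indicator (cell G j) x) \<in> Ucomp l G"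
  unfolding Ucomp_eq by blast

lemma Sp_0: "(\<lambda>x. 0) \<in> Ucomp l G"
proof -
  have "(\<lambda>x. \<Sum>j<N. (\<lambda>j x. 0) j x * indicator (cell G j) x) \<in> Ucomp l G"
    by (rule Sp_I) (auto intro: Vspan_0 C1_0)
  then show ?thesis by simp
qed

lemma Sp_add: assumes "u \<in> Ucomp l G" "w \<in> Ucomp l G" shows "(\<lambda>x. u x + w x) \<in> Ucomp l G"
proof -
  obtain v where v: "\<forall>j<N. v j \<in> Vspan l \<inter> C1" "u = (\<lambda>x. \<Sum>j<N. v j x * indicator (cell G j) x)"
    using assms by (auto simp: Ucomp_eq)
  obtain v' where v': "\<forall>j<N. v' j \<in> Vspan l \<inter> C1" "w = (\<lambda>x. \<Sum>j<N. v' j x * indicator (cell G j) x)"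
    using assms by (auto simp: Ucomp_eq)
  have "(\<lambda>x. \<Sum>j<N. (\<lambda>j x. v j x + v' j x) j x * indicator (cell G j) x) \<in> Ucomp l G"
    by (rule Sp_I) (use v v' in \<open>auto intro: Vspan_add C1_add\<close>)
  moreover have "(\<lambda>x. \<Sum>j<N. (\<lambda>j x. v j x + v' j x) j x * indicator (cell G j) x) = (\<lambda>x. u x + w x)"
    by (auto simp: v v' algebra_simps sum.distrib)
  ultimately show ?thesis by simp
qed

lemma Sp_scal: assumes "u \<in> Ucomp l G" shows "(\<lambda>x. c * u x) \<in> Ucomp l G"
proof -
  obtain v where v: "\<forall>j<N. v j \<in> Vspan l \<inter> C1" "u = (\<lambda>x. \<Sum>j<N. v j x * indicator (cell G j) x)"
    using assms by (auto simp: Ucomp_eq)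
  have "(\<lambda>x. \<Sum>j<N. (\<lambda>j x. c * v j x) j x * indicator (cell G j) x) \<in> Ucomp l G"
    by (rule Sp_I) (use v in \<open>auto intro: Vspan_scal C1_scal\<close>)
  moreover have "(\<lambda>x. \<Sum>j<N. (\<lambda>j x. c * v j x) j x * indicator (cell G j) x) = (\<lambda>x. c * u x)"
    by (auto simp: v algebra_simps sum_distrib_left)
  ultimately show ?thesis by simp
qed

lemma Sp_sum: assumes "finite Q" "\<And>q. q \<in> Q \<Longrightarrow> d q \<in> Ucomp l G"
  shows "(\<lambda>x. \<Sum>q\<in>Q. c q * d q x) \<in> Ucomp l G"
  using assms
proof (induction Q rule: finite_induct)
  case empty then show ?case using Sp_0 by simp
next
  case (insert q Q)
  have "(\<lambda>x. c q * d q x + (\<Sum>q\<in>Q. c q * d q x)) \<in> Ucomp l G"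
    using Sp_add[OF Sp_scal insert.IH] insert.prems by auto
  then show ?case using insert.hyps by simp
qed

lemma Sp_span: "Ucomp l G \<subseteq> ispan ({..<N} \<times> l) (\<lambda>(j,g) x. g x * indicator (cell G j) x)"
proof
  fix u assume "u \<in> Ucomp l G"
  then obtain v where v: "\<forall>j<N. v j \<in> Vspan l \<inter> C1" "u = (\<lambda>x. \<Sum>j<N. v j x * indicator (cell G j) x)"
    by (auto simp: Ucomp_eq)
  have "\<forall>j\<in>{..<N}. \<exists>c. v j = (\<lambda>x. \<Sum>g\<in>l. c g * g x)" using v(1) by (auto simp: Vspan_def)
  then obtain cc where cc: "\<And>j. j < N \<Longrightarrow> v j = (\<lambda>x. \<Sum>g\<in>l. cc j g * g x)" by (metis lessThan_iff)
  have "u = (\<lambda>x. \<Sum>(j,g)\<in>{..<N} \<times> l. cc j g * (g x * indicator (cell G j) x))"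
  proof
    fix x
    have "u x = (\<Sum>j<N. (\<Sum>g\<in>l. cc j g * g x) * indicator (cell G j) x)"
      using v(2) cc by auto
    also have "\<dots> = (\<Sum>j<N. \<Sum>g\<in>l. cc j g * (g x * indicator (cell G j) x))"
      by (simp add: sum_distrib_right mult.assoc)
    also have "\<dots> = (\<Sum>(j,g)\<in>{..<N} \<times> l. cc j g * (g x * indicator (cell G j) x))"
      by (rule sum.cartesian_product)
    finally show "u x = (\<Sum>(j,g)\<in>{..<N} \<times> l. cc j g * (g x * indicator (cell G j) x))" .
  qed
  then have "u = (\<lambda>x. \<Sum>i\<in>{..<N} \<times> l. (\<lambda>(j,g). cc j g) i * ((\<lambda>(j,g) x. g x * indicator (cell G j) x) i x))"
    by (simp add: case_prod_unfold)
  then show "u \<in> ispan ({..<N} \<times> l) (\<lambda>(j,g) x. g x * indicator (cell G j) x)"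
    unfolding ispan_def by blast
qed

lemma int_PCr: assumes "PCr h u" "continuous_on UNIV \<psi>"
  shows "integrable lborel (\<lambda>x. u x * \<psi> x)"
    "(LINT x|lborel. u x * \<psi> x) = (\<Sum>j<N. LINT x|lborel. (h j x * \<psi> x) * indicator (cell G j) x)"
proof -
  have eq: "(\<lambda>x. u x * \<psi> x) = (\<lambda>x. \<Sum>j<N. (h j x * \<psi> x) * indicator (cell G j) x)"
  proof
    fix x
    have "u x * \<psi> x = (\<Sum>j<N. h j x * indicator (cell G j) x) * \<psi> x" using assms(1) by (simp add: PCr_def)
    also have "\<dots> = (\<Sum>j<N. h j x * indicator (cell G j) x * \<psi> x)" by (rule sum_distrib_right)
    also have "\<dots> = (\<Sum>j<N. (h j x * \<psi> x) * indicator (cell G j) x)" by (rule sum.cong) (simp_all add: mult_ac)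
    finally show "u x * \<psi> x = (\<Sum>j<N. (h j x * \<psi> x) * indicator (cell G j) x)" .
  qed
  have int: "integrable lborel (\<lambda>x. (h j x * \<psi> x) * indicator (cell G j) x)" if "j < N" for j
    unfolding cell_eq by (rule int_ioo) (use assms that in \<open>auto simp: PCr_def intro!: continuous_intros\<close>)
  show "integrable lborel (\<lambda>x. u x * \<psi> x)" unfolding eq by (rule Bochner_Integration.integrable_sum) (use int in auto)
  show "(LINT x|lborel. u x * \<psi> x) = (\<Sum>j<N. LINT x|lborel. (h j x * \<psi> x) * indicator (cell G j) x)"
    unfolding eq by (rule Bochner_Integration.integral_sum) (use int in auto)
qed

lemma int_PCr2: assumes "PCr h u" "PCr k w"
  shows "integrable lborel (\<lambda>x. u x * w x)"
    "(LINT x|lborel. u x * w x) = (\<Sum>j<N. LINT x|lborel. (h j x * k j x) * indicator (cell G j) x)"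
proof -
  have eq: "(\<lambda>x. u x * w x) = (\<lambda>x. \<Sum>j<N. (h j x * k j x) * indicator (cell G j) x)"
    using assms by (auto simp: PCr_def sum_prod)
  have int: "integrable lborel (\<lambda>x. (h j x * k j x) * indicator (cell G j) x)" if "j < N" for j
    unfolding cell_eq by (rule int_ioo) (use assms that in \<open>auto simp: PCr_def intro!: continuous_intros\<close>)
  show "integrable lborel (\<lambda>x. u x * w x)" unfolding eq by (rule Bochner_Integration.integrable_sum) (use int in auto)
  show "(LINT x|lborel. u x * w x) = (\<Sum>j<N. LINT x|lborel. (h j x * k j x) * indicator (cell G j) x)"
    unfolding eq by (rule Bochner_Integration.integral_sum) (use int in auto)
qed

lemma PCx_PCr: assumes "PCx v u" shows "PCr v (\<lambda>x. \<Sum>j<N. v j x * indicator (cell G j) x)"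
  using assms by (auto simp: PCx_def PCr_def intro: C1D(3))

lemma int_PCx: assumes "PCx v u" "continuous_on UNIV \<psi>"
  shows "integrable lborel (\<lambda>x. u x * \<psi> x)"
    "(LINT x|lborel. u x * \<psi> x) = (\<Sum>j<N. LINT x|lborel. (v j x * \<psi> x) * indicator (cell G j) x)"
proof -
  define u' where "u' = (\<lambda>x. \<Sum>j<N. v j x * indicator (cell G j) x)"
  have r: "PCr v u'" unfolding u'_def by (rule PCx_PCr[OF assms(1)])
  have eq: "x \<notin> G \<Longrightarrow> u' x * \<psi> x = u x * \<psi> x" for x using assms(1) by (auto simp: PCx_def u'_def)
  have cG: "countable G" using finG by (rule countable_finite)
  have "integrable lborel (\<lambda>x. u' x * \<psi> x) \<longleftrightarrow> integrable lborel (\<lambda>x. u x * \<psi> x)"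
    by (rule integrable_discrete_difference[OF cG]) (auto simp: eq)
  then show "integrable lborel (\<lambda>x. u x * \<psi> x)" using int_PCr(1)[OF r assms(2)] by simp
  have "(LINT x|lborel. u' x * \<psi> x) = (LINT x|lborel. u x * \<psi> x)"
    by (rule integral_discrete_difference[OF cG]) (auto simp: eq)
  then show "(LINT x|lborel. u x * \<psi> x) = (\<Sum>j<N. LINT x|lborel. (v j x * \<psi> x) * indicator (cell G j) x)"
    using int_PCr(2)[OF r assms(2)] by simp
qed

lemma Sp_int: assumes "u \<in> Ucomp l G" "w \<in> Ucomp l G" shows "integrable lborel (\<lambda>x. u x * w x)"
proof -
  obtain v where "PCr v u" using Sp_rep[OF assms(1)] by metis
  moreover obtain v' where "PCr v' w" using Sp_rep[OF assms(2)] by metis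
  ultimately show ?thesis by (rule int_PCr2)
qed

lemma Sp_def0: assumes "u \<in> Ucomp l G" "(LINT x|lborel. u x * u x) = 0" shows "u = (\<lambda>x. 0)"
proof -
  obtain v where v: "\<And>j. j < N \<Longrightarrow> v j \<in> C1" "PCr v u" using Sp_rep[OF assms(1)] by metis
  have cv: "continuous_on UNIV (v j)" if "j < N" for j using v(1)[OF that] by (rule C1D(3))
  have I: "(LINT x|lborel. u x * u x) = (\<Sum>j<N. LINT x|lborel. (v j x * v j x) * indicator (cell G j) x)"
    by (rule int_PCr2(2)[OF v(2) v(2)])
  have nn: "0 \<le> (LINT x|lborel. (v j x * v j x) * indicator (cell G j) x)" for j
    by (rule Bochner_Integration.integral_nonneg) (simp add: indicator_def)
  have "(\<Sum>j<N. LINT x|lborel. (v j x * v j x) * indicator (cell G j) x) = 0" using assms(2) I by simp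
  then have z0: "\<forall>j\<in>{..<N}. (LINT x|lborel. (v j x * v j x) * indicator (cell G j) x) = 0"
    using sum_nonneg_eq_0_iff[OF finite_lessThan, of N "\<lambda>j. LINT x|lborel. (v j x * v j x) * indicator (cell G j) x"] nn
    by blast
  have z: "(LINT x|lborel. (v j x * v j x) * indicator (cell G j) x) = 0" if "j < N" for j
    using z0 that by simp
  have vz: "v j x = 0" if "j < N" "x \<in> cell G j" for j x
  proof -
    have lt: "gp j < gp (Suc j)" using mono that by auto
    have c2: "continuous_on UNIV (\<lambda>x. v j x * v j x)" using cv[OF that(1)] by (auto intro!: continuous_intros)
    have "integral {gp j..gp (Suc j)} (\<lambda>x. v j x * v j x) = 0"
      using z[OF that(1)] Ci_HK[OF less_imp_le[OF lt] c2] by (simp add: cell_eq)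
    then have "\<forall>x\<in>cbox (gp j) (gp (Suc j)). v j x * v j x = 0"
    proof -
      have cc: "continuous_on (cbox (gp j) (gp (Suc j))) (\<lambda>x. v j x * v j x)"
        by (rule continuous_on_subset[OF c2]) simp
      have bx: "box (gp j) (gp (Suc j)) \<noteq> {}" using lt by simp
      have "integral (cbox (gp j) (gp (Suc j))) (\<lambda>x. v j x * v j x) = 0"
        using \<open>integral {gp j..gp (Suc j)} (\<lambda>x. v j x * v j x) = 0\<close> by simp
      then show ?thesis using integral_cbox_eq_0_iff[OF cc bx] by simp
    qed
    then show ?thesis using that by (auto simp: cell_eq)
  qed
  show ?thesis
  proof
    fix x
    have "u x = (\<Sum>j<N. v j x * indicator (cell G j) x)" using v(2) by (simp add: PCr_def)
    also have "\<dots> = 0" by (rule sum.neutral) (auto simp: vz indicator_def)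
    finally show "u x = 0" .
  qed
qed

end


declare sum_mult_indicator[simp del]

context grd begin

lemma riesz_Sp:
  assumes Ladd: "\<And>u w. u \<in> Ucomp l G \<Longrightarrow> w \<in> Ucomp l G \<Longrightarrow> L (\<lambda>x. u x + w x) = L u + L w"
    and Lscal: "\<And>c u. u \<in> Ucomp l G \<Longrightarrow> L (\<lambda>x. c * u x) = c * L u"
  shows "\<exists>p\<in>Ucomp l G. \<forall>w\<in>Ucomp l G. (LINT x|lborel. p x * w x) = L w"
proof (rule riesz[where I="{..<N} \<times> l" and bs="\<lambda>(j,g) x. g x * indicator (cell G j) x"])
  show "finite ({..<N} \<times> l)" using finl by simp
  show "Ucomp l G \<subseteq> ispan ({..<N} \<times> l) (\<lambda>(j,g) x. g x * indicator (cell G j) x)" by (rule Sp_span)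
  show "(\<lambda>x. 0) \<in> Ucomp l G" by (rule Sp_0)
  show "\<And>u w. u \<in> Ucomp l G \<Longrightarrow> w \<in> Ucomp l G \<Longrightarrow> (\<lambda>x. u x + w x) \<in> Ucomp l G" by (rule Sp_add)
  show "\<And>c u. u \<in> Ucomp l G \<Longrightarrow> (\<lambda>x. c * u x) \<in> Ucomp l G" by (rule Sp_scal)
  show "(LINT x|lborel. (u x + v x) * w x) = (LINT x|lborel. u x * w x) + (LINT x|lborel. v x * w x)"
    if "u \<in> Ucomp l G" "v \<in> Ucomp l G" "w \<in> Ucomp l G" for u v w
    using Sp_int[OF that(1,3)] Sp_int[OF that(2,3)] by (simp add: distrib_right)
  show "(LINT x|lborel. (c * u x) * w x) = c * (LINT x|lborel. u x * w x)"
    if "u \<in> Ucomp l G" "w \<in> Ucomp l G" for c u w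
    by (simp add: mult.assoc)
  show "(LINT x|lborel. u x * w x) = (LINT x|lborel. w x * u x)" for u w :: "real \<Rightarrow> real"
  proof -
    have e: "(\<lambda>x. u x * w x) = (\<lambda>x. w x * u x)" by (rule ext) (rule mult.commute)
    show ?thesis by (simp only: e)
  qed
  show "u = (\<lambda>x. 0)" if "u \<in> Ucomp l G" "(LINT x|lborel. u x * u x) = 0" for u
    by (rule Sp_def0[OF that])
qed (use Ladd Lscal in auto)

lemma uniq_Sp: assumes "p1 \<in> Ucomp l G" "p2 \<in> Ucomp l G"
  "\<And>w. w \<in> Ucomp l G \<Longrightarrow> (LINT x|lborel. p1 x * w x) = (LINT x|lborel. p2 x * w x)"
  shows "p1 = p2"
proof -
  define d where "d = (\<lambda>x. p1 x + (-1) * p2 x)"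
  have dS: "d \<in> Ucomp l G" unfolding d_def by (rule Sp_add[OF assms(1) Sp_scal[OF assms(2)]])
  have e: "(\<lambda>x. d x * d x) = (\<lambda>x. p1 x * d x - p2 x * d x)" by (simp add: d_def algebra_simps)
  have "(LINT x|lborel. d x * d x) = (LINT x|lborel. p1 x * d x) - (LINT x|lborel. p2 x * d x)"
    unfolding e by (rule Bochner_Integration.integral_diff[OF Sp_int[OF assms(1) dS] Sp_int[OF assms(2) dS]])
  also have "\<dots> = 0" using assms(3)[OF dS] by simp
  finally have "d = (\<lambda>x. 0)" using Sp_def0[OF dS] by simp
  then show ?thesis by (auto simp: d_def fun_eq_iff)
qed

lemma tendsto_right: assumes "PCx v u" "m < N"
  shows "(u \<longlongrightarrow> v m (gp m)) (at_right (gp m))"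
proof -
  have c: "continuous_on UNIV (v m)" using assms by (auto simp: PCx_def intro: C1D(3))
  have "(v m \<longlongrightarrow> v m (gp m)) (at (gp m))"
    using c by (simp add: continuous_on_eq_continuous_at isCont_def)
  then have 1: "(v m \<longlongrightarrow> v m (gp m)) (at_right (gp m))" by (rule tendsto_mono[OF at_le, rotated]) simp
  have lt: "gp m < gp (Suc m)" using mono assms by auto
  have "eventually (\<lambda>x. x \<in> {gp m<..<gp (Suc m)}) (at_right (gp m))" by (rule eventually_at_right_real[OF lt])
  then have "eventually (\<lambda>x. v m x = u x) (at_right (gp m))"
  proof (rule eventually_mono)
    fix x assume "x \<in> {gp m<..<gp (Suc m)}"
    then have x: "x \<in> cell G m" by (simp add: cell_eq)
    then have "x \<notin> G" using cell_notG assms by blast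
    then show "v m x = u x" using assms(1) sum_single[OF assms(2) x] by (simp add: PCx_def)
  qed
  then show ?thesis using 1 by (rule Lim_transform_eventually[rotated])
qed

lemma tendsto_left: assumes "PCx v u" "0 < m" "m \<le> N"
  shows "(u \<longlongrightarrow> v (m - 1) (gp m)) (at_left (gp m))"
proof -
  have mN: "m - 1 < N" using assms by auto
  have c: "continuous_on UNIV (v (m - 1))" using assms mN by (auto simp: PCx_def intro: C1D(3))
  have "(v (m - 1) \<longlongrightarrow> v (m - 1) (gp m)) (at (gp m))"
    using c by (simp add: continuous_on_eq_continuous_at isCont_def)
  then have 1: "(v (m - 1) \<longlongrightarrow> v (m - 1) (gp m)) (at_left (gp m))" by (rule tendsto_mono[OF at_le, rotated]) simp
  have sm: "Suc (m - 1) = m" using assms by auto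
  have lt: "gp (m - 1) < gp m" using mono assms by auto
  have "eventually (\<lambda>x. x \<in> {gp (m - 1)<..<gp m}) (at_left (gp m))" by (rule eventually_at_left_real[OF lt])
  then have "eventually (\<lambda>x. v (m - 1) x = u x) (at_left (gp m))"
  proof (rule eventually_mono)
    fix x assume "x \<in> {gp (m - 1)<..<gp m}"
    moreover have "cell G (m - 1) = {gp (m - 1)<..<gp m}" using sm by (simp only: cell_eq)
    ultimately have x: "x \<in> cell G (m - 1)" by simp
    then have "x \<notin> G" using cell_notG mN by blast
    then show "v (m - 1) x = u x" using assms(1) sum_single[OF mN x] by (simp add: PCx_def)
  qed
  then show ?thesis using 1 by (rule Lim_transform_eventually[rotated])
qed

lemma Lim_right: "PCx v u \<Longrightarrow> m < N \<Longrightarrow> Lim (at_right (gp m)) u = v m (gp m)"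
  by (rule tendsto_Lim) (auto intro: tendsto_right)

lemma Lim_left: "PCx v u \<Longrightarrow> 0 < m \<Longrightarrow> m \<le> N \<Longrightarrow> Lim (at_left (gp m)) u = v (m - 1) (gp m)"
  using tendsto_left[of v u m] by (intro tendsto_Lim) auto

lemma uval_int: assumes "PCx v u" "0 < m" "m < N"
  shows "uval G u (gp m) = (v m (gp m) + v (m - 1) (gp m)) / 2"
proof -
  have "gp m \<noteq> Min G" using gp_inj[of m 0] assms gp0 MinG by auto
  moreover have "gp m \<noteq> Max G" using gp_inj[of m N] assms gpN MaxG by auto
  moreover have "gp m \<in> G" using gp_in assms by auto
  ultimately show ?thesis using Lim_right[OF assms(1,3)] Lim_left[OF assms(1,2)] assms
    by (simp add: uval_def)
qed

lemma PCx_add: "PCx v u \<Longrightarrow> PCx v' w \<Longrightarrow> PCx (\<lambda>j x. v j x + v' j x) (\<lambda>x. u x + w x)"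
  by (auto simp: PCx_def C1_add algebra_simps sum.distrib)

lemma PCx_scal: "PCx v u \<Longrightarrow> PCx (\<lambda>j x. c * v j x) (\<lambda>x. c * u x)"
  by (auto simp: PCx_def C1_scal algebra_simps sum_distrib_left)

lemma Sp_PCx: assumes "u \<in> Ucomp l G" obtains v where "PCx v u"
  using Sp_rep[OF assms] by metis

lemma uprime_PCr: assumes "PCx v u" shows "PCr (\<lambda>j. deriv (v j)) (uprime G u)"
proof -
  have C: "\<And>j. j < N \<Longrightarrow> v j \<in> C1" using assms by (simp add: PCx_def)
  have "uprime G u x = (\<Sum>j<N. deriv (v j) x * indicator (cell G j) x)" for x
  proof (cases "x \<in> G")
    case True
    then have "\<And>j. j < N \<Longrightarrow> x \<notin> cell G j" using cell_notG by blast
    then show ?thesis using True by (simp add: uprime_def sum_none)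
  next
    case False
    show ?thesis
    proof (cases "\<exists>j<N. x \<in> cell G j")
      case True
      then obtain j where j: "j < N" "x \<in> cell G j" by blast
      have "(u has_real_derivative deriv (v j) x) (at x)"
      proof (rule has_field_derivative_transform_within_open[where S="cell G j"])
        show "(v j has_real_derivative deriv (v j) x) (at x)" using C1D(1)[OF C[OF j(1)]] .
        show "open (cell G j)" by (simp add: cell_eq)
        show "x \<in> cell G j" by fact
        fix y assume y: "y \<in> cell G j"
        then have "y \<notin> G" using cell_notG j by blast
        then show "v j y = u y" using assms sum_single[OF j(1) y] by (simp add: PCx_def)
      qed
      then have "deriv u x = deriv (v j) x" by (rule DERIV_imp_deriv)
      then show ?thesis using False sum_single[OF j] by (simp add: uprime_def)
    next
      case nc: False
      then have xo: "x \<in> - {-b..b}" using cover False by blast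
      have "(u has_real_derivative 0) (at x)"
      proof (rule has_field_derivative_transform_within_open[where S="- {-b..b}" and f="\<lambda>_. 0"])
        show "((\<lambda>_. 0) has_real_derivative 0) (at x)" by simp
        show "open (- {-b..b})" by (simp add: open_Compl)
        show "x \<in> - {-b..b}" by fact
        fix y assume y: "y \<in> - {-b..b}"
        then have "y \<notin> G" using Gsub by blast
        moreover have "\<And>j. j < N \<Longrightarrow> y \<notin> cell G j" using cell_sub y by fastforce
        ultimately show "0 = u y" using assms by (simp add: PCx_def sum_none)
      qed
      then have "deriv u x = 0" by (rule DERIV_imp_deriv)
      then show ?thesis using False nc by (simp add: uprime_def sum_none)
    qed
  qed
  moreover have "\<And>j. j < N \<Longrightarrow> continuous_on UNIV (deriv (v j))" using C C1D(2) by blast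
  ultimately show ?thesis by (auto simp: PCr_def)
qed

lemma proj: assumes "PCr h g"
  shows "uproj l G g \<in> Ucomp l G"
    "\<And>w. w \<in> Ucomp l G \<Longrightarrow> (LINT x|lborel. uproj l G g x * w x) = (LINT x|lborel. g x * w x)"
proof -
  have intg: "integrable lborel (\<lambda>x. g x * w x)" if wS: "w \<in> Ucomp l G" for w
  proof -
    obtain v where "PCr v w" using Sp_rep[OF wS] by metis
    then show ?thesis using int_PCr2(1)[OF assms] by blast
  qed
  obtain p where p: "p \<in> Ucomp l G" "\<And>w. w \<in> Ucomp l G \<Longrightarrow> (LINT x|lborel. p x * w x) = (LINT x|lborel. g x * w x)"
  proof -
    have "\<exists>p\<in>Ucomp l G. \<forall>w\<in>Ucomp l G. (LINT x|lborel. p x * w x) = (LINT x|lborel. g x * w x)"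
    proof (rule riesz_Sp)
      fix u w assume "u \<in> Ucomp l G" "w \<in> Ucomp l G"
      then show "(LINT x|lborel. g x * (u x + w x)) = (LINT x|lborel. g x * u x) + (LINT x|lborel. g x * w x)"
        using intg by (simp add: distrib_left)
    next
      fix c u assume "u \<in> Ucomp l G"
      show "(LINT x|lborel. g x * (c * u x)) = c * (LINT x|lborel. g x * u x)"
        by (simp add: mult.left_commute)
    qed
    then show ?thesis using that by blast
  qed
  have P: "p \<in> Ucomp l G \<and> (\<forall>w\<in>Ucomp l G. (LINT x|lborel. (g x - p x) * w x) = 0)"
  proof -
    have "(LINT x|lborel. (g x - p x) * w x) = 0" if "w \<in> Ucomp l G" for w
      using intg[OF that] Sp_int[OF p(1) that] p(2)[OF that] by (simp add: left_diff_distrib)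
    then show ?thesis using p(1) by blast
  qed
  have U: "q = p" if "q \<in> Ucomp l G \<and> (\<forall>w\<in>Ucomp l G. (LINT x|lborel. (g x - q x) * w x) = 0)" for q
  proof (rule uniq_Sp)
    show "q \<in> Ucomp l G" "p \<in> Ucomp l G" using that p(1) by auto
    fix w assume w: "w \<in> Ucomp l G"
    have "(LINT x|lborel. (g x - q x) * w x) = 0" using that w by blast
    then have "(LINT x|lborel. q x * w x) = (LINT x|lborel. g x * w x)"
      using intg[OF w] Sp_int[OF _ w, of q] that by (simp add: left_diff_distrib)
    then show "(LINT x|lborel. q x * w x) = (LINT x|lborel. p x * w x)" using p(2)[OF w] by simp
  qed
  have "uproj l G g = p" unfolding uproj_def
    by (rule the_equality[where P="\<lambda>p. p \<in> Ucomp l G \<and> (\<forall>w\<in>Ucomp l G. (LINT x|lborel. (g x - p x) * w x) = 0)", OF P U])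
  then show "uproj l G g \<in> Ucomp l G"
    "\<And>w. w \<in> Ucomp l G \<Longrightarrow> (LINT x|lborel. uproj l G g x * w x) = (LINT x|lborel. g x * w x)"
    using p by auto
qed

lemma delta: assumes "0 < m" "m < N"
  shows "udelta l G (gp m) \<in> Ucomp l G"
    "\<And>w. w \<in> Ucomp l G \<Longrightarrow> (LINT x|lborel. w x * udelta l G (gp m) x) = uval G w (gp m)"
proof -
  let ?q = "gp m"
  define L where "L = (\<lambda>w. uval G w ?q)"
  have Ladd: "L (\<lambda>x. u x + w x) = L u + L w" if uw: "u \<in> Ucomp l G" "w \<in> Ucomp l G" for u w
  proof -
    obtain v where v: "PCx v u" using Sp_PCx[OF uw(1)] by metis
    obtain v' where v': "PCx v' w" using Sp_PCx[OF uw(2)] by metis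
    show ?thesis unfolding L_def
      using uval_int[OF v assms] uval_int[OF v' assms] uval_int[OF PCx_add[OF v v'] assms]
      by (simp add: field_simps)
  qed
  have Lscal: "L (\<lambda>x. c * u x) = c * L u" if uw: "u \<in> Ucomp l G" for c u
  proof -
    obtain v where v: "PCx v u" using Sp_PCx[OF uw(1)] by metis
    show ?thesis unfolding L_def uval_int[OF v assms] uval_int[OF PCx_scal[OF v, of c] assms]
      by (simp add: algebra_simps)
  qed
  obtain p where p: "p \<in> Ucomp l G" "\<And>w. w \<in> Ucomp l G \<Longrightarrow> (LINT x|lborel. p x * w x) = L w"
    using riesz_Sp[of L, OF Ladd Lscal] by blast
  have P: "p \<in> Ucomp l G \<and> (\<forall>w\<in>Ucomp l G. (LINT x|lborel. w x * p x) = uval G w ?q)"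
    using p by (auto simp: L_def mult.commute)
  have U: "d = p" if "d \<in> Ucomp l G \<and> (\<forall>w\<in>Ucomp l G. (LINT x|lborel. w x * d x) = uval G w ?q)" for d
  proof (rule uniq_Sp)
    show "d \<in> Ucomp l G" "p \<in> Ucomp l G" using that p(1) by auto
    fix w assume w: "w \<in> Ucomp l G"
    have "(LINT x|lborel. w x * d x) = (LINT x|lborel. w x * p x)" using that w P by simp
    moreover have "(\<lambda>x. w x * d x) = (\<lambda>x. d x * w x)" "(\<lambda>x. w x * p x) = (\<lambda>x. p x * w x)"
      by (rule ext, rule mult.commute)+
    ultimately show "(LINT x|lborel. d x * w x) = (LINT x|lborel. p x * w x)" by simp
  qed
  have "udelta l G ?q = p" unfolding udelta_def
    by (rule the_equality[where P="\<lambda>p. p \<in> Ucomp l G \<and> (\<forall>w\<in>Ucomp l G. (LINT x|lborel. w x * p x) = uval G w ?q)", OF P U])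
  then show "udelta l G ?q \<in> Ucomp l G"
    "\<And>w. w \<in> Ucomp l G \<Longrightarrow> (LINT x|lborel. w x * udelta l G ?q x) = uval G w ?q"
    using P by auto
qed

end


declare sum_mult_indicator[simp del]

lemma tele: fixes A B :: "nat \<Rightarrow> real" assumes "1 \<le> n"
  shows "(\<Sum>j<n. (A j - B j)) + (\<Sum>m\<in>{1..<n}. (B m - A (m - 1))) = A (n - 1) - B 0"
  using assms
proof (induction n rule: dec_induct)
  case base then show ?case by simp
next
  case (step n)
  have "{1..<Suc n} = insert n {1..<n}" using step.hyps by auto
  then have "(\<Sum>m\<in>{1..<Suc n}. (B m - A (m - 1))) = (B n - A (n - 1)) + (\<Sum>m\<in>{1..<n}. (B m - A (m - 1)))"
    by simp
  then show ?case using step.IH by simp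
qed

context grd begin

lemma Qs_eq: "G - {Min G, Max G} = gp ` {1..<N}"
proof
  show "G - {Min G, Max G} \<subseteq> gp ` {1..<N}"
  proof
    fix q assume q: "q \<in> G - {Min G, Max G}"
    then obtain j where j: "j \<le> N" "q = gp j" using G_gp by blast
    have "j \<noteq> 0"
    proof
      assume "j = 0" then show False using q j gp0 MinG by simp
    qed
    moreover have "j \<noteq> N"
    proof
      assume "j = N" then show False using q j gpN MaxG by simp
    qed
    ultimately show "q \<in> gp ` {1..<N}" using j by auto
  qed
  show "gp ` {1..<N} \<subseteq> G - {Min G, Max G}"
  proof
    fix q assume "q \<in> gp ` {1..<N}"
    then obtain m where m: "m \<in> {1..<N}" "q = gp m" by blast
    have "gp m \<noteq> gp 0" "gp m \<noteq> gp N" using gp_inj[of m 0] gp_inj[of m N] m by auto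
    then show "q \<in> G - {Min G, Max G}" using m gp_in[of m] gp0 gpN MinG MaxG by auto
  qed
qed

lemma inj_gp: "inj_on gp {1..<N}"
  by (rule inj_onI) (use gp_inj in auto)

lemma key:
  fixes \<psi> \<psi>' :: "real \<Rightarrow> real"
  assumes u: "PCx v u" and psiV: "\<psi> \<in> Vspan l"
    and dpsi: "\<And>x. (\<psi> has_real_derivative \<psi>' x) (at x)" and cpsi': "continuous_on UNIV \<psi>'"
    and z0: "\<psi> (-b) = 0" and z1: "\<psi> b = 0"
  shows "(LINT x|lborel. uD l G u x * \<psi> x) = - (LINT x|lborel. u x * \<psi>' x)"
proof -
  have psiC1: "\<psi> \<in> C1" by (rule C1I[OF dpsi cpsi'])
  have cpsi: "continuous_on UNIV \<psi>" by (rule C1D(3)[OF psiC1])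
  have vC: "\<And>j. j < N \<Longrightarrow> v j \<in> C1" using u by (simp add: PCx_def)
  define Psi where "Psi = (\<lambda>x. \<Sum>j<N. (\<lambda>j. \<psi>) j x * indicator (cell G j) x)"
  have PsiS: "Psi \<in> Ucomp l G" unfolding Psi_def by (rule Sp_I) (use psiV psiC1 in auto)
  have PsiX: "PCx (\<lambda>j. \<psi>) Psi" by (simp add: PCx_def Psi_def psiC1)
  have PsiR: "PCr (\<lambda>j. \<psi>) Psi" by (simp add: PCr_def Psi_def cpsi)
  define g where "g = uprime G u"
  have gr: "PCr (\<lambda>j. deriv (v j)) g" unfolding g_def by (rule uprime_PCr[OF u])
  define P where "P = uproj l G g"
  have PS: "P \<in> Ucomp l G" unfolding P_def by (rule proj(1)[OF gr])
  have Pp: "\<And>w. w \<in> Ucomp l G \<Longrightarrow> (LINT x|lborel. P x * w x) = (LINT x|lborel. g x * w x)"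
    unfolding P_def by (rule proj(2)[OF gr])
  define Qs where "Qs = G - {Min G, Max G}"
  have finQ: "finite Qs" using finG by (simp add: Qs_def)
  define c where "c = (\<lambda>q. Lim (at_right q) u - Lim (at_left q) u)"
  define D where "D = uD l G u"
  have Du: "D = (\<lambda>x. P x + (\<Sum>q\<in>Qs. c q * udelta l G q x))"
    unfolding D_def uD_def P_def g_def Qs_def c_def by simp
  have dS: "udelta l G q \<in> Ucomp l G" if qQ: "q \<in> Qs" for q
  proof -
    obtain m where "m \<in> {1..<N}" "q = gp m" using qQ Qs_eq by (auto simp: Qs_def)
    then show ?thesis using delta(1)[of m] by auto
  qed
  have dP: "(LINT x|lborel. udelta l G q x * Psi x) = \<psi> q" if qQ: "q \<in> Qs" for q
  proof -
    obtain m where m: "m \<in> {1..<N}" "q = gp m" using qQ Qs_eq by (auto simp: Qs_def)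
    have "(LINT x|lborel. Psi x * udelta l G q x) = uval G Psi q" using delta(2)[of m Psi] m PsiS by auto
    also have "\<dots> = \<psi> q" using uval_int[OF PsiX, of m] m by auto
    finally have 1: "(LINT x|lborel. Psi x * udelta l G q x) = \<psi> q" .
    have e: "(\<lambda>x. Psi x * udelta l G q x) = (\<lambda>x. udelta l G q x * Psi x)" by (rule ext) (rule mult.commute)
    show ?thesis using 1 e by simp
  qed
  have DS: "D \<in> Ucomp l G" unfolding Du by (rule Sp_add[OF PS Sp_sum[OF finQ dS]])
  have s1: "(LINT x|lborel. D x * \<psi> x) = (LINT x|lborel. D x * Psi x)"
  proof -
    obtain h where h: "PCr h D" using Sp_rep[OF DS] by metis
    have pw: "D x * \<psi> x = D x * Psi x" for x
    proof (cases "\<exists>j<N. x \<in> cell G j")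
      case True
      then obtain j where j: "j < N" "x \<in> cell G j" by blast
      have "Psi x = \<psi> x" unfolding Psi_def by (rule sum_single[OF j])
      then show ?thesis by simp
    next
      case False
      then have "D x = 0" using h by (simp add: PCr_def sum_none)
      then show ?thesis by simp
    qed
    have "(\<lambda>x. D x * \<psi> x) = (\<lambda>x. D x * Psi x)" by (rule ext) (rule pw)
    then show ?thesis by simp
  qed
  have s2: "(LINT x|lborel. D x * Psi x) = (LINT x|lborel. P x * Psi x) + (\<Sum>q\<in>Qs. c q * (LINT x|lborel. udelta l G q x * Psi x))"
  proof -
    have e: "(\<lambda>x. D x * Psi x) = (\<lambda>x. P x * Psi x + (\<Sum>q\<in>Qs. c q * (udelta l G q x * Psi x)))"
      unfolding Du by (simp add: distrib_right sum_distrib_right mult.assoc)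
    have i1: "integrable lborel (\<lambda>x. P x * Psi x)" by (rule Sp_int[OF PS PsiS])
    have i2: "integrable lborel (\<lambda>x. c q * (udelta l G q x * Psi x))" if "q \<in> Qs" for q
      using Sp_int[OF dS[OF that] PsiS] by simp
    have i3: "integrable lborel (\<lambda>x. \<Sum>q\<in>Qs. c q * (udelta l G q x * Psi x))"
      by (rule Bochner_Integration.integrable_sum) (use i2 in auto)
    have "(LINT x|lborel. D x * Psi x) = (LINT x|lborel. P x * Psi x) + (LINT x|lborel. (\<Sum>q\<in>Qs. c q * (udelta l G q x * Psi x)))"
      unfolding e by (rule Bochner_Integration.integral_add[OF i1 i3])
    also have "(LINT x|lborel. (\<Sum>q\<in>Qs. c q * (udelta l G q x * Psi x))) = (\<Sum>q\<in>Qs. (LINT x|lborel. c q * (udelta l G q x * Psi x)))"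
      by (rule Bochner_Integration.integral_sum) (use i2 in auto)
    also have "\<dots> = (\<Sum>q\<in>Qs. c q * (LINT x|lborel. udelta l G q x * Psi x))"
      by (rule sum.cong) auto
    finally show ?thesis .
  qed
  have s3: "(\<Sum>q\<in>Qs. c q * (LINT x|lborel. udelta l G q x * Psi x)) = (\<Sum>q\<in>Qs. c q * \<psi> q)"
    by (rule sum.cong) (auto simp: dP)
  define A where "A = (\<lambda>j. v j (gp (Suc j)) * \<psi> (gp (Suc j)))"
  define B where "B = (\<lambda>j. v j (gp j) * \<psi> (gp j))"
  define C where "C = (\<lambda>j. LINT x|lborel. (v j x * \<psi>' x) * indicator (cell G j) x)"
  have s4: "(\<Sum>q\<in>Qs. c q * \<psi> q) = (\<Sum>m\<in>{1..<N}. (B m - A (m - 1)))"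
  proof -
    have "(\<Sum>q\<in>Qs. c q * \<psi> q) = (\<Sum>m\<in>{1..<N}. c (gp m) * \<psi> (gp m))"
      unfolding Qs_def Qs_eq by (rule sum.reindex[OF inj_gp, unfolded comp_def])
    also have "\<dots> = (\<Sum>m\<in>{1..<N}. (B m - A (m - 1)))"
    proof (rule sum.cong)
      fix m assume m: "m \<in> {1..<N}"
      have sm: "Suc (m - 1) = m" using m by auto
      have ceq: "c (gp m) = v m (gp m) - v (m - 1) (gp m)"
        using Lim_right[OF u, of m] Lim_left[OF u, of m] m by (simp add: c_def)
      have aeq: "A (m - 1) = v (m - 1) (gp m) * \<psi> (gp m)" unfolding A_def sm by (rule refl)
      have "c (gp m) * \<psi> (gp m) = (v m (gp m) - v (m - 1) (gp m)) * \<psi> (gp m)" by (simp only: ceq)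
      also have "\<dots> = B m - A (m - 1)" by (simp only: aeq B_def left_diff_distrib)
      finally show "c (gp m) * \<psi> (gp m) = B m - A (m - 1)" .
    qed simp
    finally show ?thesis .
  qed
  have s5: "(LINT x|lborel. g x * Psi x) = (\<Sum>j<N. (A j - B j - C j))"
  proof -
    have "(LINT x|lborel. g x * Psi x) = (\<Sum>j<N. LINT x|lborel. (deriv (v j) x * \<psi> x) * indicator (cell G j) x)"
      by (rule int_PCr2(2)[OF gr PsiR])
    also have "\<dots> = (\<Sum>j<N. (A j - B j - C j))"
    proof (rule sum.cong)
      fix j assume j: "j \<in> {..<N}"
      have le: "gp j \<le> gp (Suc j)" using mono_le j by auto
      show "(LINT x|lborel. (deriv (v j) x * \<psi> x) * indicator (cell G j) x) = A j - B j - C j"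
        unfolding A_def B_def C_def cell_eq by (rule Ci_parts[OF le vC dpsi cpsi']) (use j in auto)
    qed simp
    finally show ?thesis .
  qed
  have s6: "(LINT x|lborel. u x * \<psi>' x) = (\<Sum>j<N. C j)"
    unfolding C_def by (rule int_PCx(2)[OF u cpsi'])
  have t: "(\<Sum>j<N. (A j - B j)) + (\<Sum>m\<in>{1..<N}. (B m - A (m - 1))) = A (N - 1) - B 0"
    by (rule tele[OF N1])
  have A0: "A (N - 1) = 0" using N1 z1 gpN by (simp add: A_def)
  have B0: "B 0 = 0" using z0 gp0 by (simp add: B_def)
  have "(LINT x|lborel. D x * \<psi> x) = (\<Sum>j<N. (A j - B j - C j)) + (\<Sum>m\<in>{1..<N}. (B m - A (m - 1)))"
    using s1 s2 s3 s4 s5 Pp[OF PsiS] by simp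
  also have "\<dots> = ((\<Sum>j<N. (A j - B j)) + (\<Sum>m\<in>{1..<N}. (B m - A (m - 1)))) - (\<Sum>j<N. C j)"
    by (simp add: sum_subtractf)
  also have "\<dots> = - (LINT x|lborel. u x * \<psi>' x)" using t A0 B0 s6 by simp
  finally show ?thesis unfolding D_def .
qed

end


declare sum_mult_indicator[simp del]

context grd begin

lemma uD_Sp: assumes u: "PCx v u" shows "uD l G u \<in> Ucomp l G"
proof -
  have PS: "uproj l G (uprime G u) \<in> Ucomp l G" by (rule proj(1)[OF uprime_PCr[OF u]])
  have dS: "udelta l G q \<in> Ucomp l G" if qQ: "q \<in> G - {Min G, Max G}" for q
  proof -
    obtain m where "m \<in> {1..<N}" "q = gp m" using qQ Qs_eq by auto
    then show ?thesis using delta(1)[of m] by auto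
  qed
  have finQ: "finite (G - {Min G, Max G})" using finG by simp
  show ?thesis unfolding uD_def by (rule Sp_add[OF PS Sp_sum[OF finQ dS]])
qed

lemma iter:
  fixes \<phi> :: "real \<Rightarrow> real" and k :: nat
  assumes inl: "\<And>i. i \<le> k \<Longrightarrow> (deriv ^^ i) \<phi> \<in> l"
    and der: "\<And>i x. ((deriv ^^ i) \<phi> has_real_derivative (deriv ^^ Suc i) \<phi> x) (at x)"
    and cont: "\<And>i. continuous_on UNIV ((deriv ^^ i) \<phi>)"
    and zb: "\<And>i. (deriv ^^ i) \<phi> (-b) = 0" "\<And>i. (deriv ^^ i) \<phi> b = 0"
  shows "PCx v u \<Longrightarrow> n + m \<le> k \<Longrightarrow>
    (LINT x|lborel. ((uD l G) ^^ m) u x * (deriv ^^ n) \<phi> x) = (-1) ^ m * (LINT x|lborel. u x * (deriv ^^ (n + m)) \<phi> x)"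
proof (induction m arbitrary: v u n)
  case 0 then show ?case by simp
next
  case (Suc m)
  have DS: "uD l G u \<in> Ucomp l G" by (rule uD_Sp[OF Suc.prems(1)])
  obtain v' where v': "PCx v' (uD l G u)" using Sp_PCx[OF DS] by metis
  have "(LINT x|lborel. ((uD l G) ^^ Suc m) u x * (deriv ^^ n) \<phi> x)
      = (LINT x|lborel. ((uD l G) ^^ m) (uD l G u) x * (deriv ^^ n) \<phi> x)"
    by (simp add: funpow_Suc_right del: funpow.simps)
  also have "\<dots> = (-1) ^ m * (LINT x|lborel. uD l G u x * (deriv ^^ (n + m)) \<phi> x)"
    using Suc.IH[OF v'] Suc.prems(2) by simp
  also have "(LINT x|lborel. uD l G u x * (deriv ^^ (n + m)) \<phi> x) = - (LINT x|lborel. u x * (deriv ^^ Suc (n + m)) \<phi> x)"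
  proof (rule key[OF Suc.prems(1)])
    show "(deriv ^^ (n + m)) \<phi> \<in> Vspan l" using Vspan_mem[OF finl inl] Suc.prems(2) by simp
  qed (use der cont[of "Suc (n + m)"] cont zb in auto)
  finally show ?case by simp
qed

lemma PCx_f: assumes "f \<in> C1" shows "PCx (\<lambda>j. f) (\<lambda>x. f x * indicator {-b..b} x)"
proof -
  have "f x * indicator {-b..b} x = (\<Sum>j<N. f x * indicator (cell G j) x)" if xG: "x \<notin> G" for x
  proof (cases "x \<in> {-b..b}")
    case True
    then obtain j where j: "j < N" "x \<in> cell G j" using cover xG by blast
    show ?thesis using sum_single[OF j, of "\<lambda>j. f x"] True by simp
  next
    case False
    then have "\<And>j. j < N \<Longrightarrow> x \<notin> cell G j" using cell_sub by fastforce
    then show ?thesis using False by (simp add: sum_none)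
  qed
  then show ?thesis using assms by (simp add: PCx_def)
qed

end

lemma derivs_zero:
  fixes \<phi> :: "real \<Rightarrow> real"
  assumes "\<And>x. R < \<bar>x\<bar> \<Longrightarrow> \<phi> x = 0"
  shows "R < \<bar>x\<bar> \<Longrightarrow> (deriv ^^ i) \<phi> x = 0"
proof (induction i arbitrary: x)
  case 0 then show ?case using assms by simp
next
  case (Suc i)
  have op: "open {x::real. R < \<bar>x\<bar>}" by (rule open_Collect_less) (auto intro!: continuous_intros)
  have "((deriv ^^ i) \<phi> has_real_derivative 0) (at x)"
  proof (rule has_field_derivative_transform_within_open[where S="{x. R < \<bar>x\<bar>}" and f="\<lambda>_. 0"])
    show "((\<lambda>_. 0) has_real_derivative 0) (at x)" by simp
  qed (use op Suc in auto)
  then show ?case by (simp add: DERIV_imp_deriv)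
qed



theorem mainTheorem15:
  fixes U :: "(real \<Rightarrow> real) set filter"
    and \<beta> \<eta> :: "(real \<Rightarrow> real) set \<Rightarrow> real"
    and \<Gamma> :: "(real \<Rightarrow> real) set \<Rightarrow> real set"
    and T :: "(real \<Rightarrow> real) \<Rightarrow> real"
    and f \<phi> :: "real \<Rightarrow> real" and k :: nat
  assumes "fine_ultra U"
    and "\<forall>n::real. eventually (\<lambda>l. n < \<beta> l) U"
    and "\<forall>\<epsilon>>0. eventually (\<lambda>l. \<eta> l < \<epsilon>) U"
    and "eventually (\<lambda>l. grid_ok (\<beta> l) (\<eta> l) (\<Gamma> l)) U"
    and "\<forall>r::real. eventually (\<lambda>l. r \<in> \<Gamma> l) U"
    and "Cminf T"
    and "k = (LEAST k. \<exists>g\<in>C1. dist_deriv_eq T k g)"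
    and "f \<in> C1" and "dist_deriv_eq T k f"
    and "test_fun \<phi>"
  shows "eventually (\<lambda>l. (LINT x|lborel.
            ((uD l (\<Gamma> l)) ^^ k) (\<lambda>x. f x * indicator {-\<beta> l..\<beta> l} x) x * \<phi> x) = T \<phi>) U"
proof -
  have fu1: "eventually finite U" and fu2: "\<And>a. finite a \<Longrightarrow> eventually (\<lambda>l. a \<subseteq> l) U"
    using assms(1) by (auto simp: fine_ultra_def)
  have diff: "\<And>n x. (deriv ^^ n) \<phi> differentiable (at x)" and cpt: "compact (closure {x. \<phi> x \<noteq> 0})"
    using assms(10) by (auto simp: test_fun_def)
  have der: "((deriv ^^ i) \<phi> has_real_derivative (deriv ^^ Suc i) \<phi> x) (at x)" for i x
    using diff[of i x] by (simp add: DERIV_deriv_iff_real_differentiable)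
  have cont: "continuous_on UNIV ((deriv ^^ i) \<phi>)" for i
    using der[of i] by (meson DERIV_isCont continuous_at_imp_continuous_on)
  obtain a where a: "\<And>x. x \<in> closure {x. \<phi> x \<noteq> 0} \<Longrightarrow> norm x \<le> a"
    using compact_imp_bounded[OF cpt] by (auto simp: bounded_iff)
  define R where "R = max a 0"
  have R0: "0 \<le> R" by (simp add: R_def)
  have Rphi: "\<phi> x = 0" if "R < \<bar>x\<bar>" for x
  proof (rule ccontr)
    assume "\<phi> x \<noteq> 0"
    then have "x \<in> closure {x. \<phi> x \<noteq> 0}" by (simp add: closure_def)
    then have "\<bar>x\<bar> \<le> a" using a by fastforce
    then show False using that by (simp add: R_def)
  qed
  have zero: "(deriv ^^ i) \<phi> x = 0" if "R < \<bar>x\<bar>" for i x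
    by (rule derivs_zero[OF Rphi that])
  have fin: "finite ((\<lambda>i. (deriv ^^ i) \<phi>) ` {..k})" by simp
  have ev: "eventually (\<lambda>l. finite l \<and> grid_ok (\<beta> l) (\<eta> l) (\<Gamma> l) \<and> R < \<beta> l
      \<and> (\<lambda>i. (deriv ^^ i) \<phi>) ` {..k} \<subseteq> l) U"
  proof -
    have e2: "eventually (\<lambda>l. R < \<beta> l) U" using assms(2) by blast
    show ?thesis using eventually_conj[OF fu1 eventually_conj[OF assms(4) eventually_conj[OF e2 fu2[OF fin]]]]
      by simp
  qed
  show ?thesis
  proof (rule eventually_mono[OF ev])
    fix l assume H: "finite l \<and> grid_ok (\<beta> l) (\<eta> l) (\<Gamma> l) \<and> R < \<beta> l \<and> (\<lambda>i. (deriv ^^ i) \<phi>) ` {..k} \<subseteq> l"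
    have gk: "finite (\<Gamma> l)" "\<Gamma> l \<subseteq> {-\<beta> l..\<beta> l}" "-\<beta> l \<in> \<Gamma> l" "\<beta> l \<in> \<Gamma> l"
      using H by (auto simp: grid_ok_def)
    interpret g: grd l "\<Gamma> l" "\<beta> l"
      by unfold_locales (use H gk R0 in auto)
    have inl: "(deriv ^^ i) \<phi> \<in> l" if "i \<le> k" for i using H that by auto
    have bp: "R < \<bar>\<beta> l\<bar>" "R < \<bar>- \<beta> l\<bar>" using H R0 by auto
    have zb1: "(deriv ^^ i) \<phi> (- \<beta> l) = 0" for i by (rule zero[OF bp(2)])
    have zb2: "(deriv ^^ i) \<phi> (\<beta> l) = 0" for i by (rule zero[OF bp(1)])
    have "(LINT x|lborel. ((uD l (\<Gamma> l)) ^^ k) (\<lambda>x. f x * indicator {-\<beta> l..\<beta> l} x) x * (deriv ^^ 0) \<phi> x)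
        = (-1) ^ k * (LINT x|lborel. f x * indicator {-\<beta> l..\<beta> l} x * (deriv ^^ (0 + k)) \<phi> x)"
      using g.iter[where k=k and n=0 and m=k, OF inl der cont zb1 zb2 g.PCx_f[OF assms(8)]] by simp
    also have "(\<lambda>x. f x * indicator {-\<beta> l..\<beta> l} x * (deriv ^^ (0 + k)) \<phi> x) = (\<lambda>x. f x * (deriv ^^ k) \<phi> x)"
    proof
      fix x
      show "f x * indicator {-\<beta> l..\<beta> l} x * (deriv ^^ (0 + k)) \<phi> x = f x * (deriv ^^ k) \<phi> x"
      proof (cases "x \<in> {-\<beta> l..\<beta> l}")
        case False
        then have "R < \<bar>x\<bar>" using H by auto
        then show ?thesis using zero by simp
      qed simp
    qed
    also have "(-1) ^ k * (LINT x|lborel. f x * (deriv ^^ k) \<phi> x) = T \<phi>"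
      using assms(9,10) by (simp add: dist_deriv_eq_def)
    finally show "(LINT x|lborel. ((uD l (\<Gamma> l)) ^^ k) (\<lambda>x. f x * indicator {-\<beta> l..\<beta> l} x) x * \<phi> x) = T \<phi>"
      by simp
  qed
qed


end
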